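(* Let $c \in (0,1/2]$, $t_1 \in [0,1-2c]$, $t_2 \in [t_1+c,1-c]$, and let $p,q \in (0,1)$ with $p \neq q$. Let $F$, $\mu_p$, $\mu_q$, $\Lambda_{p,q}$ and $\gamma_r$ be as described in the context. Then for every $r \in \Lambda_{p,q}$, \[ \int_{F \times F} |x-y| \, d\gamma_r(x,y) \;=\; \frac{t_2-t_1}{1-c}\, \frac{c(p-q)^2+(1-c)(p+q-2r)}{(1-c)+c(p+q-2r)}. \]
   Context: Let $S_1(x)=cx+t_1$ and $S_2(x)=cx+t_2$ on $[0,1]$. Let $F\subseteq[0,1]$ be the unique nonempty compact set with $F=S_1(F)\cup S_2(F)$. For $p\in(0,1)$, $\mu_p$ is the unique Borel probability measure with $\mu_p = p\,\mu_p\circ S_1^{-1} + (1-p)\,\mu_p\circ S_2^{-1}$ (supported on $F$). On $[0,1]^2$ define $S_{i,j}(x,y)=(S_i(x),S_j(y))$ for $i,j\in\{1,2\}$. Let $\Lambda_{p,q}$ be the open interval $\max\{0,p+q-1\}<r<\min\{p,q\}$. For $r\in\Lambda_{p,q}$, $\gamma_r$ is the unique Borel probability measure on $[0,1]^2$ satisfying $\gamma_r = r\,\gamma_r\circ S_{1,1}^{-1} + (p-r)\,\gamma_r\circ S_{1,2}^{-1} + (q-r)\,\gamma_r\circ S_{2,1}^{-1} + (1-p-q+r)\,\gamma_r\circ S_{2,2}^{-1}$; it is supported on $F\times F$ and is a coupling of $\mu_p$ and $\mu_q$ (its first marginal is $\mu_p$, its second is $\mu_q$). *)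

theory Defs
  imports "HOL-Analysis.Analysis" "HOL-Probability.Probability"
begin

definition sim :: "real \<Rightarrow> real \<Rightarrow> real \<Rightarrow> real" where
  "sim c t x = c * x + t"

definition attractor :: "real \<Rightarrow> real \<Rightarrow> real \<Rightarrow> real set" where
  "attractor c t1 t2 = (THE F. F \<noteq> {} \<and> compact F \<and> F = sim c t1 ` F \<union> sim c t2 ` F)"

definition sim2 :: "real \<Rightarrow> real \<Rightarrow> real \<Rightarrow> real \<times> real \<Rightarrow> real \<times> real" where
  "sim2 c ti tj z = (sim c ti (fst z), sim c tj (snd z))"

text \<open>gamma is a Borel probability measure on [0,1]^2 satisfying the self-similarity
  equation with weights r, p-r, q-r, 1-p-q+r (this determines gamma_r uniquely).\<close>
definition is_gamma :: "real \<Rightarrow> real \<Rightarrow> real \<Rightarrow> real \<Rightarrow> real \<Rightarrow> real \<Rightarrow> (real \<times> real) measure \<Rightarrow> bool" where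
  "is_gamma c t1 t2 p q r M \<longleftrightarrow>
     sets M = sets borel \<and> prob_space M \<and> emeasure M ({0..1} \<times> {0..1}) = 1 \<and>
     (\<forall>A \<in> sets borel.
        measure M A = r * measure M (sim2 c t1 t1 -` A)
                    + (p - r) * measure M (sim2 c t1 t2 -` A)
                    + (q - r) * measure M (sim2 c t2 t1 -` A)
                    + (1 - p - q + r) * measure M (sim2 c t2 t2 -` A))"

end

theory Submission
  imports Defs
begin

lemma nn_ident:
  fixes M :: "'a::topological_space measure" and u :: "'a \<Rightarrow> ennreal"
  assumes sM: "sets M = sets borel" and fin: "finite_measure M"
  and g: "\<And>i. i\<in>I \<Longrightarrow> g i \<in> borel_measurable borel"
  and w: "\<And>i. i\<in>I \<Longrightarrow> 0 \<le> w i"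
  and eq: "\<And>A. A \<in> sets borel \<Longrightarrow> measure M A = (\<Sum>i\<in>I. w i * measure M (g i -` A))"
  and u: "u \<in> borel_measurable borel"
  shows "(\<integral>\<^sup>+z. u z \<partial>M) = (\<Sum>i\<in>I. ennreal (w i) * (\<integral>\<^sup>+z. u (g i z) \<partial>M))"
  using u
proof -
  have mM: "\<And>f::'a\<Rightarrow>ennreal. f \<in> borel_measurable borel \<Longrightarrow> f \<in> borel_measurable M"
    using measurable_cong_sets[OF sM refl] by metis
  show ?thesis using u
proof (induction rule: borel_measurable_induct)
  case (cong f h)
  then show ?case by simp
next
  case (set A)
  have mA: "A \<in> sets M" using set sM by simp
  have mgA: "g i -` A \<in> sets M" if "i \<in> I" for i
  proof -
    have "g i -` A \<inter> space borel \<in> sets borel"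
      using measurable_sets[OF g[OF that] set] .
    then show ?thesis using sM by simp
  qed
  have "(\<integral>\<^sup>+z. indicator A z \<partial>M) = emeasure M A" using mA by simp
  also have "\<dots> = ennreal (measure M A)" using fin finite_measure.emeasure_eq_measure by blast
  also have "\<dots> = ennreal (\<Sum>i\<in>I. w i * measure M (g i -` A))" using eq[OF set] by simp
  also have "\<dots> = (\<Sum>i\<in>I. ennreal (w i) * ennreal (measure M (g i -` A)))"
    by (subst sum_ennreal[symmetric]) (auto simp: w ennreal_mult intro!: sum.cong)
  also have "\<dots> = (\<Sum>i\<in>I. ennreal (w i) * (\<integral>\<^sup>+z. indicator A (g i z) \<partial>M))"
  proof (intro sum.cong refl)
    fix i assume i: "i \<in> I"
    have "(\<integral>\<^sup>+z. indicator A (g i z) \<partial>M) = (\<integral>\<^sup>+z. indicator (g i -` A) z \<partial>M)"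
      by (simp add: indicator_def)
    also have "\<dots> = emeasure M (g i -` A)" using mgA[OF i] by simp
    also have "\<dots> = ennreal (measure M (g i -` A))" using fin finite_measure.emeasure_eq_measure by blast
    finally show "ennreal (w i) * ennreal (measure M (g i -` A)) = ennreal (w i) * (\<integral>\<^sup>+z. indicator A (g i z) \<partial>M)"
      by simp
  qed
  finally show ?case .
next
  case (mult v c)
  have mv: "v \<in> borel_measurable M" by (rule mM[OF mult(2)])
  have mvg: "(\<lambda>z. v (g i z)) \<in> borel_measurable M" if "i \<in> I" for i
    by (rule mM[OF measurable_compose[OF g[OF that] mult(2)]])
  have "(\<integral>\<^sup>+z. c * v z \<partial>M) = c * (\<integral>\<^sup>+z. v z \<partial>M)" by (rule nn_integral_cmult[OF mv])
  also have "\<dots> = (\<Sum>i\<in>I. ennreal (w i) * (\<integral>\<^sup>+z. c * v (g i z) \<partial>M))"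
    unfolding mult(4) sum_distrib_left
    by (intro sum.cong refl) (simp add: nn_integral_cmult[OF mvg] mult.left_commute)
  finally show ?case .
next
  case (add v h)
  have mv: "v \<in> borel_measurable M" "h \<in> borel_measurable M" by (rule mM[OF \<open>v \<in> borel_measurable borel\<close>], rule mM[OF \<open>h \<in> borel_measurable borel\<close>])
  have mvg: "(\<lambda>z. v (g i z)) \<in> borel_measurable M" "(\<lambda>z. h (g i z)) \<in> borel_measurable M" if "i \<in> I" for i
    by (rule mM[OF measurable_compose[OF g[OF that] \<open>v \<in> borel_measurable borel\<close>]], rule mM[OF measurable_compose[OF g[OF that] \<open>h \<in> borel_measurable borel\<close>]])
  have "(\<integral>\<^sup>+z. h z + v z \<partial>M) = (\<integral>\<^sup>+z. h z \<partial>M) + (\<integral>\<^sup>+z. v z \<partial>M)"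
    by (rule nn_integral_add) (use mv in auto)
  also have "\<dots> = (\<Sum>i\<in>I. ennreal (w i) * (\<integral>\<^sup>+z. h (g i z) + v (g i z) \<partial>M))"
    unfolding add.IH sum.distrib[symmetric]
    by (intro sum.cong refl) (simp add: nn_integral_add[OF mvg(2) mvg(1)] distrib_left)
  finally show ?case .
next
  case (seq U)
  have mU: "U n \<in> borel_measurable M" for n by (rule mM[OF seq(1)])
  have mUg: "(\<lambda>z. U n (g i z)) \<in> borel_measurable M" if "i \<in> I" for i n
    by (rule mM[OF measurable_compose[OF g[OF that] seq(1)]])
  have incg: "incseq (\<lambda>n z. U n (g i z))" for i
    using \<open>incseq U\<close> by (auto simp: incseq_def le_fun_def)
  have "(\<integral>\<^sup>+z. (SUP n. U n) z \<partial>M) = (\<integral>\<^sup>+z. (SUP n. U n z) \<partial>M)" by (simp add: image_comp)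
  also have "\<dots> = (SUP n. \<integral>\<^sup>+z. U n z \<partial>M)"
    by (rule nn_integral_monotone_convergence_SUP[OF \<open>incseq U\<close> mU])
  also have "\<dots> = (SUP n. \<Sum>i\<in>I. ennreal (w i) * (\<integral>\<^sup>+z. U n (g i z) \<partial>M))"
    using seq.IH by simp
  also have "\<dots> = (\<Sum>i\<in>I. SUP n. ennreal (w i) * (\<integral>\<^sup>+z. U n (g i z) \<partial>M))"
  proof (rule ennreal_SUP_sum)
    fix i assume "i \<in> I"
    show "incseq (\<lambda>n. ennreal (w i) * (\<integral>\<^sup>+z. U n (g i z) \<partial>M))"
      using incg[of i] unfolding incseq_def
      by (auto intro!: mult_left_mono nn_integral_mono simp: le_fun_def)
  qed
  also have "\<dots> = (\<Sum>i\<in>I. ennreal (w i) * (\<integral>\<^sup>+z. (SUP n. U n) (g i z) \<partial>M))"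
  proof (intro sum.cong refl)
    fix i assume i: "i \<in> I"
    have "(\<integral>\<^sup>+z. (SUP n. U n) (g i z) \<partial>M) = (\<integral>\<^sup>+z. (SUP n. U n (g i z)) \<partial>M)" by (simp add: image_comp)
    also have "\<dots> = (SUP n. \<integral>\<^sup>+z. U n (g i z) \<partial>M)"
      by (rule nn_integral_monotone_convergence_SUP[OF incg mUg[OF i]])
    finally show "(SUP n. ennreal (w i) * (\<integral>\<^sup>+z. U n (g i z) \<partial>M)) = ennreal (w i) * (\<integral>\<^sup>+z. (SUP n. U n) (g i z) \<partial>M)"
      by (simp add: SUP_mult_left_ennreal)
  qed
  finally show ?case .
qed
qed

lemma approx_lemma:
  fixes K :: "nat \<Rightarrow> real set" and B :: "real set"
  assumes c: "0 < c" and KS: "\<And>n. K (Suc n) \<subseteq> sim c t1 ` K n \<union> sim c t2 ` K n"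
  and BS: "sim c t1 ` B \<subseteq> B" "sim c t2 ` B \<subseteq> B"
  and K0: "\<And>x. x \<in> K 0 \<Longrightarrow> \<exists>y\<in>B. \<bar>x - y\<bar> \<le> R"
  shows "x \<in> K n \<Longrightarrow> \<exists>y\<in>B. \<bar>x - y\<bar> \<le> c^n * R"
proof (induction n arbitrary: x)
  case 0
  then show ?case using K0 by simp
next
  case (Suc n)
  then obtain t x' where tx: "t = t1 \<or> t = t2" "x' \<in> K n" "x = sim c t x'"
    using KS[of n] by blast
  obtain y' where y': "y' \<in> B" "\<bar>x' - y'\<bar> \<le> c^n * R" using Suc.IH[OF tx(2)] by blast
  have "sim c t y' \<in> B" using tx(1) y'(1) BS by blast
  moreover have "\<bar>x - sim c t y'\<bar> = c * \<bar>x' - y'\<bar>"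
    using tx(3) c by (simp add: sim_def abs_mult flip: right_diff_distrib)
  moreover have "c * \<bar>x' - y'\<bar> \<le> c * (c^n * R)" using y'(2) c by (simp add: mult_left_mono)
  ultimately show ?case by (intro bexI[of _ "sim c t y'"]) auto
qed

lemma approx_closed:
  fixes K :: "nat \<Rightarrow> real set" and B :: "real set"
  assumes c: "0 < c" "c < 1" and KS: "\<And>n. K (Suc n) \<subseteq> sim c t1 ` K n \<union> sim c t2 ` K n"
  and BS: "sim c t1 ` B \<subseteq> B" "sim c t2 ` B \<subseteq> B" and cl: "closed B"
  and R: "0 < R"
  and K0: "\<And>x. x \<in> K 0 \<Longrightarrow> \<exists>y\<in>B. \<bar>x - y\<bar> \<le> R"
  and x: "\<And>n. x \<in> K n"
  shows "x \<in> B"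
proof -
  have "\<forall>e>0. \<exists>y\<in>B. dist y x < e"
  proof (intro allI impI)
    fix e :: real assume e: "0 < e"
    obtain n where n: "c^n < e / R" using real_arch_pow_inv[of "e/R" c] e R c by auto
    obtain y where y: "y \<in> B" "\<bar>x - y\<bar> \<le> c^n * R"
      using approx_lemma[OF c(1) KS BS K0 x[of n]] by blast
    have "c^n * R < e" using n R by (simp add: field_simps)
    then show "\<exists>y\<in>B. dist y x < e" using y by (intro bexI[of _ y]) (auto simp: dist_real_def abs_minus_commute)
  qed
  then show ?thesis using closed_approachable[OF cl] by blast
qed

lemma subset_invariant:
  fixes A B :: "real set"
  assumes c: "0 < c" "c < 1" and A: "bounded A" "A \<subseteq> sim c t1 ` A \<union> sim c t2 ` A"
  and B: "bounded B" "B \<noteq> {}" "closed B" "sim c t1 ` B \<subseteq> B" "sim c t2 ` B \<subseteq> B"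
  shows "A \<subseteq> B"
proof
  fix x assume x: "x \<in> A"
  obtain a where a: "\<And>z. z \<in> A \<Longrightarrow> \<bar>z\<bar> \<le> a" using A(1) by (auto simp: bounded_iff)
  obtain b where b: "\<And>z. z \<in> B \<Longrightarrow> \<bar>z\<bar> \<le> b" using B(1) by (auto simp: bounded_iff)
  obtain y0 where y0: "y0 \<in> B" using B(2) by blast
  have "0 \<le> a" using a[OF x] by simp
  have "0 \<le> b" using b[OF y0] by simp
  show "x \<in> B"
  proof (rule approx_closed[OF c, of "\<lambda>n. A" t1 t2 B "a + b + 1"])
    show "\<exists>y\<in>B. \<bar>z - y\<bar> \<le> a + b + 1" if "z \<in> A" for z
      using a[OF that] b[OF y0] y0 by (intro bexI[of _ y0]) auto
  qed (use A B x \<open>0 \<le> a\<close> \<open>0 \<le> b\<close> in auto)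
qed

inductive_set orb :: "real \<Rightarrow> real \<Rightarrow> real \<Rightarrow> real set" for c t1 t2 where
  base: "t1 / (1 - c) \<in> orb c t1 t2"
| s1: "x \<in> orb c t1 t2 \<Longrightarrow> sim c t1 x \<in> orb c t1 t2"
| s2: "x \<in> orb c t1 t2 \<Longrightarrow> sim c t2 x \<in> orb c t1 t2"

lemma orb_bounds:
  assumes c: "0 < c" "c < 1" and t: "t1 \<le> t2"
  shows "x \<in> orb c t1 t2 \<Longrightarrow> x \<in> {t1/(1-c) .. t2/(1-c)}"
proof (induction rule: orb.induct)
  case base
  then show ?case using c t by (auto simp: divide_right_mono)
next
  case (s1 x)
  have ha: "t1/(1-c) = c * (t1/(1-c)) + t1" using c by (simp add: field_simps)
  have hb: "t2/(1-c) = c * (t2/(1-c)) + t2" using c by (simp add: field_simps)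
  have "c * (t1/(1-c)) \<le> c * x" by (rule mult_left_mono) (use s1.IH c in auto)
  moreover have "c * x \<le> c * (t2/(1-c))" by (rule mult_left_mono) (use s1.IH c in auto)
  ultimately show ?case using ha hb t by (auto simp: sim_def)
next
  case (s2 x)
  have ha: "t1/(1-c) = c * (t1/(1-c)) + t1" using c by (simp add: field_simps)
  have hb: "t2/(1-c) = c * (t2/(1-c)) + t2" using c by (simp add: field_simps)
  have "c * (t1/(1-c)) \<le> c * x" by (rule mult_left_mono) (use s2.IH c in auto)
  moreover have "c * x \<le> c * (t2/(1-c))" by (rule mult_left_mono) (use s2.IH c in auto)
  ultimately show ?case using ha hb t by (auto simp: sim_def)
qed

lemma orb_eq:
  assumes c: "c < 1"
  shows "orb c t1 t2 = sim c t1 ` orb c t1 t2 \<union> sim c t2 ` orb c t1 t2"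
proof
  show "orb c t1 t2 \<subseteq> sim c t1 ` orb c t1 t2 \<union> sim c t2 ` orb c t1 t2"
  proof
    fix x assume "x \<in> orb c t1 t2"
    then show "x \<in> sim c t1 ` orb c t1 t2 \<union> sim c t2 ` orb c t1 t2"
    proof cases
      case base
      have "x = sim c t1 (t1/(1-c))" using base c by (simp add: sim_def field_simps)
      then show ?thesis using orb.base by blast
    qed auto
  qed
qed (auto intro: orb.intros)

lemma continuous_sim: "continuous_on S (sim c t)"
  unfolding sim_def by (intro continuous_intros)

lemma closure_sim: "sim c t ` closure (X::real set) = closure (sim c t ` X)" if "bounded X"
proof
  show "sim c t ` closure X \<subseteq> closure (sim c t ` X)"
    by (rule image_closure_subset[OF continuous_sim closed_closure closure_subset])
  have "compact (sim c t ` closure X)"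
    using that by (intro compact_continuous_image continuous_sim) (simp add: compact_closure)
  then show "closure (sim c t ` X) \<subseteq> sim c t ` closure X"
    by (intro closure_minimal compact_imp_closed) (auto intro: closure_subset[THEN subsetD])
qed

lemma attractor_props:
  assumes c: "0 < c" "c < 1" and t: "t1 \<le> t2"
  shows "attractor c t1 t2 = closure (orb c t1 t2)"
    and "attractor c t1 t2 \<subseteq> {t1/(1-c) .. t2/(1-c)}"
    and "attractor c t1 t2 \<noteq> {}" "compact (attractor c t1 t2)"
    and "attractor c t1 t2 = sim c t1 ` attractor c t1 t2 \<union> sim c t2 ` attractor c t1 t2"
proof -
  define G where "G = closure (orb c t1 t2)"
  have bo: "orb c t1 t2 \<subseteq> {t1/(1-c) .. t2/(1-c)}" using orb_bounds[OF c t] by blast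
  have bnd: "bounded (orb c t1 t2)" using bo bounded_subset bounded_closed_interval by blast
  have Gsub: "G \<subseteq> {t1/(1-c) .. t2/(1-c)}" unfolding G_def using bo by (simp add: closure_minimal)
  have Gne: "G \<noteq> {}" unfolding G_def using orb.base by auto
  have Gc: "compact G" unfolding G_def using bnd by (simp add: compact_closure)
  have Geq: "G = sim c t1 ` G \<union> sim c t2 ` G"
    unfolding G_def closure_sim[OF bnd] closure_Un[symmetric] using orb_eq[OF c(2)] by simp
  have "attractor c t1 t2 = G"
    unfolding attractor_def
  proof (rule the_equality)
    show "G \<noteq> {} \<and> compact G \<and> G = sim c t1 ` G \<union> sim c t2 ` G" using Gne Gc Geq by blast
    fix F assume F: "F \<noteq> {} \<and> compact F \<and> F = sim c t1 ` F \<union> sim c t2 ` F"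
    have Fb: "bounded F" "closed F" "F \<noteq> {}" using F by (auto intro: compact_imp_bounded compact_imp_closed)
    have Fi: "F \<subseteq> sim c t1 ` F \<union> sim c t2 ` F" "sim c t1 ` F \<subseteq> F" "sim c t2 ` F \<subseteq> F"
      using F by blast+
    have Gb: "bounded G" "closed G" using Gc by (auto intro: compact_imp_bounded compact_imp_closed)
    have Gi: "G \<subseteq> sim c t1 ` G \<union> sim c t2 ` G" "sim c t1 ` G \<subseteq> G" "sim c t2 ` G \<subseteq> G"
      using Geq by blast+
    have "F \<subseteq> G" by (rule subset_invariant[OF c Fb(1) Fi(1) Gb(1) Gne Gb(2) Gi(2) Gi(3)])
    moreover have "G \<subseteq> F" by (rule subset_invariant[OF c Gb(1) Gi(1) Fb(1) Fb(3) Fb(2) Fi(2) Fi(3)])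
    ultimately show "F = G" by blast
  qed
  then show "attractor c t1 t2 = closure (orb c t1 t2)"
    and "attractor c t1 t2 \<subseteq> {t1/(1-c) .. t2/(1-c)}"
    and "attractor c t1 t2 \<noteq> {}" "compact (attractor c t1 t2)"
    and "attractor c t1 t2 = sim c t1 ` attractor c t1 t2 \<union> sim c t2 ` attractor c t1 t2"
    using G_def Gsub Gne Gc Geq by simp_all
qed

lemma real_ident:
  fixes M :: "(real \<times> real) measure" and f :: "real \<times> real \<Rightarrow> real"
  assumes sM: "sets M = sets borel" and ps: "prob_space M"
  and g: "\<And>i. i\<in>I \<Longrightarrow> g i \<in> borel_measurable borel"
  and w: "\<And>i. i\<in>I \<Longrightarrow> 0 \<le> w i"
  and eq: "\<And>A. A \<in> sets borel \<Longrightarrow> measure M A = (\<Sum>i\<in>I. w i * measure M (g i -` A))"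
  and f: "f \<in> borel_measurable borel"
  and S: "AE z in M. z \<in> S" and gS: "\<And>i z. i \<in> I \<Longrightarrow> z \<in> S \<Longrightarrow> g i z \<in> S"
  and fb: "\<And>z. z \<in> S \<Longrightarrow> 0 \<le> f z \<and> f z \<le> B"
  shows "integral\<^sup>L M f = (\<Sum>i\<in>I. w i * integral\<^sup>L M (\<lambda>z. f (g i z)))"
proof -
  have fin: "finite_measure M" using ps by (simp add: prob_space_def)
  have mM: "\<And>h::real\<times>real\<Rightarrow>real. h \<in> borel_measurable borel \<Longrightarrow> h \<in> borel_measurable M"
    using measurable_cong_sets[OF sM refl] by metis
  have fg: "(\<lambda>z. f (g i z)) \<in> borel_measurable borel" if "i \<in> I" for i
    by (rule measurable_compose[OF g[OF that] f])
  have intf: "integrable M f"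
    by (rule finite_measure.integrable_const_bound[OF fin _ mM[OF f], of B])
       (use S in \<open>eventually_elim\<close>, use fb in force)
  have intfg: "integrable M (\<lambda>z. f (g i z))" if i: "i \<in> I" for i
  proof -
    have "AE z in M. norm (f (g i z)) \<le> B" using S
    proof eventually_elim
      case (elim z)
      then show ?case using fb[OF gS[OF i elim]] by simp
    qed
    then show ?thesis by (rule finite_measure.integrable_const_bound[OF fin _ mM[OF fg[OF i]]])
  qed
  have nf: "AE z in M. 0 \<le> f z" using S by eventually_elim (use fb in force)
  have nfg: "AE z in M. 0 \<le> f (g i z)" if i: "i \<in> I" for i
    using S
  proof eventually_elim
    case (elim z)
    then show ?case using fb[OF gS[OF i elim]] by simp
  qed
  have ue: "(\<lambda>z. ennreal (f z)) \<in> borel_measurable borel" using f by measurable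
  have "ennreal (integral\<^sup>L M f) = (\<integral>\<^sup>+z. ennreal (f z) \<partial>M)"
    by (rule nn_integral_eq_integral[OF intf nf, symmetric])
  also have "\<dots> = (\<Sum>i\<in>I. ennreal (w i) * (\<integral>\<^sup>+z. ennreal (f (g i z)) \<partial>M))"
    by (rule nn_ident[OF sM fin g w eq ue])
  also have "\<dots> = (\<Sum>i\<in>I. ennreal (w i) * ennreal (integral\<^sup>L M (\<lambda>z. f (g i z))))"
    by (intro sum.cong refl) (simp add: nn_integral_eq_integral[OF intfg nfg])
  also have "\<dots> = ennreal (\<Sum>i\<in>I. w i * integral\<^sup>L M (\<lambda>z. f (g i z)))"
    by (subst sum_ennreal[symmetric])
       (auto simp: w ennreal_mult integral_nonneg_AE[OF nfg] intro!: sum.cong)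
  finally show ?thesis
    by (subst (asm) ennreal_inj)
       (auto simp: integral_nonneg_AE[OF nf] integral_nonneg_AE[OF nfg] w intro!: sum_nonneg)
qed

primrec Kseq :: "real \<Rightarrow> real \<Rightarrow> real \<Rightarrow> nat \<Rightarrow> real set" where
  "Kseq c t1 t2 0 = {0..1}"
| "Kseq c t1 t2 (Suc n) = sim c t1 ` Kseq c t1 t2 n \<union> sim c t2 ` Kseq c t1 t2 n"

lemma Kseq_compact: "compact (Kseq c t1 t2 n)"
  by (induction n) (auto intro!: compact_Un compact_continuous_image continuous_sim)

lemma sim_ab:
  assumes c: "0 < c" "c < 1" and t: "t1 \<le> t2" and tt: "t = t1 \<or> t = t2"
    and x: "x \<in> {t1/(1-c) .. t2/(1-c)}"
  shows "sim c t x \<in> {t1/(1-c) .. t2/(1-c)}"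
proof -
  have ha: "t1/(1-c) = c * (t1/(1-c)) + t1" using c by (simp add: field_simps)
  have hb: "t2/(1-c) = c * (t2/(1-c)) + t2" using c by (simp add: field_simps)
  have "c * (t1/(1-c)) \<le> c * x" by (rule mult_left_mono) (use x c in auto)
  moreover have "c * x \<le> c * (t2/(1-c))" by (rule mult_left_mono) (use x c in auto)
  ultimately show ?thesis using ha hb t tt by (auto simp: sim_def)
qed

lemma sim2_meas: "sim2 c s t \<in> borel_measurable borel"
  by (rule borel_measurable_continuous_onI) (unfold sim2_def sim_def, intro continuous_intros)

theorem theorem2p1:
  fixes c t1 t2 p q r :: real and M :: "(real \<times> real) measure"
  assumes "0 < c" "c \<le> 1/2"
    and "0 \<le> t1" "t1 \<le> 1 - 2*c"
    and "t1 + c \<le> t2" "t2 \<le> 1 - c"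
    and "0 < p" "p < 1" "0 < q" "q < 1" "p \<noteq> q"
    and "max 0 (p + q - 1) < r" "r < min p q"
    and "is_gamma c t1 t2 p q r M"
  shows "(\<integral>z \<in> attractor c t1 t2 \<times> attractor c t1 t2. \<bar>fst z - snd z\<bar> \<partial>M)
       = (t2 - t1) / (1 - c) * ((c * (p - q)^2 + (1 - c) * (p + q - 2*r)) / ((1 - c) + c * (p + q - 2*r)))"
proof -
  note as = assms
  have c: "0 < c" "c < 1" using as by auto
  have t: "t1 \<le> t2" using as by auto
  define a where "a = t1/(1-c)"
  define b where "b = t2/(1-c)"
  have a0: "0 \<le> a" unfolding a_def using as c by auto
  have b1: "b \<le> 1" unfolding b_def using as c by (auto simp: field_simps)
  have ab: "a \<le> b" unfolding a_def b_def using t c by (auto simp: divide_right_mono)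
  define F where "F = attractor c t1 t2"
  have FP: "F \<subseteq> {a..b}" "F \<noteq> {}" "compact F" "F = sim c t1 ` F \<union> sim c t2 ` F"
    using attractor_props[OF c t] unfolding F_def a_def b_def by blast+
  have sM: "sets M = sets borel" and ps: "prob_space M"
    and e01: "emeasure M ({0..1} \<times> {0..1}) = 1"
    and eqA: "\<And>A. A \<in> sets borel \<Longrightarrow> measure M A = r * measure M (sim2 c t1 t1 -` A)
                    + (p - r) * measure M (sim2 c t1 t2 -` A)
                    + (q - r) * measure M (sim2 c t2 t1 -` A)
                    + (1 - p - q + r) * measure M (sim2 c t2 t2 -` A)"
    using as(14) unfolding is_gamma_def by auto
  define g where "g = (\<lambda>i::nat. if i = 0 then sim2 c t1 t1 else if i = 1 then sim2 c t1 t2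
                          else if i = 2 then sim2 c t2 t1 else sim2 c t2 t2)"
  define w where "w = (\<lambda>i::nat. if i = 0 then r else if i = 1 then p - r
                          else if i = 2 then q - r else 1 - p - q + r)"
  define I where "I = {0::nat,1,2,3}"
  have sumI: "\<And>h::nat\<Rightarrow>real. (\<Sum>i\<in>I. h i) = h 0 + h 1 + h 2 + h 3" unfolding I_def by simp
  have gm: "\<And>i. i \<in> I \<Longrightarrow> g i \<in> borel_measurable borel" unfolding g_def by (simp add: sim2_meas)
  have wn: "\<And>i. i \<in> I \<Longrightarrow> 0 \<le> w i" unfolding w_def I_def using as by auto
  have eq: "\<And>A. A \<in> sets borel \<Longrightarrow> measure M A = (\<Sum>i\<in>I. w i * measure M (g i -` A))"
    unfolding sumI using eqA by (simp add: g_def w_def)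
  have wsum: "(\<Sum>i\<in>I. w i) = 1" unfolding sumI by (simp add: w_def)
  have mM: "\<And>h::real\<times>real\<Rightarrow>real. h \<in> borel_measurable borel \<Longrightarrow> h \<in> borel_measurable M"
    using measurable_cong_sets[OF sM refl] by metis
  define K where "K = Kseq c t1 t2"
  have Kborel: "K n \<times> K n \<in> sets borel" for n
    unfolding K_def using Kseq_compact by (intro borel_closed closed_Times compact_imp_closed) auto
  have Kmeas: "measure M (K n \<times> K n) = 1" for n
  proof (induction n)
    case 0
    have "measure M ({0..1} \<times> {0..1}) = 1" using e01 by (simp add: measure_def)
    then show ?case by (simp add: K_def)
  next
    case (Suc n)
    have sub: "K n \<times> K n \<subseteq> g i -` (K (Suc n) \<times> K (Suc n))" if "i \<in> I" for i
      using that unfolding I_def g_def K_def sim2_def by auto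
    have pre: "g i -` (K (Suc n) \<times> K (Suc n)) \<in> sets M" if "i \<in> I" for i
      using measurable_sets[OF gm[OF that] Kborel[of "Suc n"]] sM by simp
    have "1 = (\<Sum>i\<in>I. w i * measure M (K n \<times> K n))" using Suc wsum by simp
    also have "\<dots> \<le> (\<Sum>i\<in>I. w i * measure M (g i -` (K (Suc n) \<times> K (Suc n))))"
      by (intro sum_mono mult_left_mono wn finite_measure.finite_measure_mono[OF _ sub pre])
         (use ps in \<open>auto simp: prob_space_def\<close>)
    also have "\<dots> = measure M (K (Suc n) \<times> K (Suc n))" using eq[OF Kborel] by simp
    finally show ?case using prob_space.prob_le_1[OF ps] by (meson antisym)
  qed
  have AEK: "AE z in M. \<forall>n. z \<in> K n \<times> K n"
    unfolding AE_all_countable using prob_space.AE_prob_1[OF ps Kmeas] by blast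
  have KF: "x \<in> F" if "\<And>n. x \<in> K n" for x
  proof (rule approx_closed[OF c, of K t1 t2 F 1])
    show "K (Suc n) \<subseteq> sim c t1 ` K n \<union> sim c t2 ` K n" for n by (simp add: K_def)
    show "sim c t1 ` F \<subseteq> F" "sim c t2 ` F \<subseteq> F" using FP(4) by blast+
    show "closed F" using FP(3) by (rule compact_imp_closed)
    show "\<exists>y\<in>F. \<bar>z - y\<bar> \<le> 1" if "z \<in> K 0" for z
    proof -
      obtain y where "y \<in> F" using FP(2) by blast
      moreover have "a \<le> y" "y \<le> b" using FP(1) \<open>y \<in> F\<close> by auto
      ultimately show ?thesis using that a0 b1 by (intro bexI[of _ y]) (auto simp: K_def)
    qed
  qed (use that in auto)
  have AEF: "AE z in M. z \<in> F \<times> F"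
    using AEK by eventually_elim (auto intro: KF)
  define S where "S = {a..b} \<times> {a..b}"
  have AES: "AE z in M. z \<in> S" using AEF by eventually_elim (use FP(1) in \<open>auto simp: S_def\<close>)
  have simab: "\<And>u x. u = t1 \<or> u = t2 \<Longrightarrow> x \<in> {a..b} \<Longrightarrow> sim c u x \<in> {a..b}"
    using sim_ab[OF c t] unfolding a_def b_def by blast
  have gS: "g i z \<in> S" if "i \<in> I" "z \<in> S" for i z
  proof -
    have z: "fst z \<in> {a..b}" "snd z \<in> {a..b}" using that(2) unfolding S_def by (auto simp: mem_Times_iff)
    have "\<exists>u v. (u = t1 \<or> u = t2) \<and> (v = t1 \<or> v = t2) \<and> g i z = (sim c u (fst z), sim c v (snd z))"
      using that(1) unfolding I_def g_def sim2_def by auto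
    then obtain u v where uv: "u = t1 \<or> u = t2" "v = t1 \<or> v = t2" "g i z = (sim c u (fst z), sim c v (snd z))"
      by blast
    show ?thesis unfolding uv(3) S_def mem_Times_iff using simab[OF uv(1) z(1)] simab[OF uv(2) z(2)] by simp
  qed
  have RI: "integral\<^sup>L M f = (\<Sum>i\<in>I. w i * integral\<^sup>L M (\<lambda>z. f (g i z)))"
    if "f \<in> borel_measurable borel" "\<And>z. z \<in> S \<Longrightarrow> 0 \<le> f z \<and> f z \<le> B" for f :: "real \<times> real \<Rightarrow> real" and B
    by (rule real_ident[where S=S and B=B]) (use sM ps gm wn eq AES gS that in auto)
  have fin: "finite_measure M" using ps by (simp add: prob_space_def)
  have intS: "integrable M h" if hm: "h \<in> borel_measurable borel" and hb: "\<And>z. z \<in> S \<Longrightarrow> \<bar>h z\<bar> \<le> 1" for h :: "real \<times> real \<Rightarrow> real"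
  proof -
    have "AE z in M. norm (h z) \<le> 1" using AES
    proof eventually_elim
      case (elim z)
      then show ?case using hb[OF elim] by simp
    qed
    then show ?thesis by (rule finite_measure.integrable_const_bound[OF fin _ mM[OF hm]])
  qed
  have Sb: "0 \<le> fst z" "fst z \<le> 1" "0 \<le> snd z" "snd z \<le> 1" "a \<le> fst z" "fst z \<le> b" "a \<le> snd z" "snd z \<le> b"
    if "z \<in> S" for z using that a0 b1 unfolding S_def by auto
  have mfst: "fst \<in> borel_measurable (borel :: (real \<times> real) measure)"
    by (intro borel_measurable_continuous_onI continuous_intros)
  have msnd: "snd \<in> borel_measurable (borel :: (real \<times> real) measure)"
    by (intro borel_measurable_continuous_onI continuous_intros)
  have mabs: "(\<lambda>z::real\<times>real. \<bar>fst z - snd z\<bar>) \<in> borel_measurable borel"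
    by (intro borel_measurable_continuous_onI continuous_intros)
  have ifst: "integrable M fst" by (rule intS[OF mfst]) (use Sb in auto)
  have isnd: "integrable M snd" by (rule intS[OF msnd]) (use Sb in auto)
  have ps1: "measure M (space M) = 1" using ps by (simp add: prob_space.prob_space)
  have lin: "integral\<^sup>L M (\<lambda>z. c * h z + k) = c * integral\<^sup>L M h + k" if "integrable M h" for h :: "real \<times> real \<Rightarrow> real" and k :: real
  proof -
    have "integral\<^sup>L M (\<lambda>z. c * h z + k) = integral\<^sup>L M (\<lambda>z. c * h z) + integral\<^sup>L M (\<lambda>z. k)"
      by (rule Bochner_Integration.integral_add) (use that finite_measure.integrable_const[OF fin] in auto)
    then show ?thesis using ps1 by (simp add: integral_mult_right_zero)
  qed
  define m1 where "m1 = integral\<^sup>L M fst"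
  define m2 where "m2 = integral\<^sup>L M snd"
  define D where "D = integral\<^sup>L M (\<lambda>z. \<bar>fst z - snd z\<bar>)"
  have E1: "m1 = (\<Sum>i\<in>I. w i * integral\<^sup>L M (\<lambda>z. fst (g i z)))"
    unfolding m1_def by (rule RI[OF mfst, where B=1]) (use Sb in auto)
  have E2: "m2 = (\<Sum>i\<in>I. w i * integral\<^sup>L M (\<lambda>z. snd (g i z)))"
    unfolding m2_def by (rule RI[OF msnd, where B=1]) (use Sb in auto)
  have E3: "D = (\<Sum>i\<in>I. w i * integral\<^sup>L M (\<lambda>z. \<bar>fst (g i z) - snd (g i z)\<bar>))"
    unfolding D_def
  proof (rule RI[OF mabs, where B=1])
    fix z :: "real \<times> real" assume "z \<in> S"
    from Sb[OF this] show "0 \<le> \<bar>fst z - snd z\<bar> \<and> \<bar>fst z - snd z\<bar> \<le> 1" by linarith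
  qed
  have m1eq: "m1 = r * (c*m1 + t1) + (p - r) * (c*m1 + t1) + (q - r) * (c*m1 + t2) + (1 - p - q + r) * (c*m1 + t2)"
    using E1 unfolding sumI by (simp add: g_def w_def sim2_def sim_def lin[OF ifst] m1_def)
  have m2eq: "m2 = r * (c*m2 + t1) + (p - r) * (c*m2 + t2) + (q - r) * (c*m2 + t1) + (1 - p - q + r) * (c*m2 + t2)"
    using E2 unfolding sumI by (simp add: g_def w_def sim2_def sim_def lin[OF isnd] m2_def)
  have g0: "g 0 = sim2 c t1 t1" and g1: "g 1 = sim2 c t1 t2" and g2: "g 2 = sim2 c t2 t1"
    and g3: "g 3 = sim2 c t2 t2" by (simp_all add: g_def)
  have mc: "h \<in> borel_measurable M" if "continuous_on UNIV h" for h :: "real \<times> real \<Rightarrow> real"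
    by (rule mM[OF borel_measurable_continuous_onI[OF that]])
  have "c*(t2-t1) \<le> (1-c)*(t2-t1)" by (rule mult_right_mono) (use as in auto)
  then have key: "c*(b-a) \<le> t2-t1" unfolding a_def b_def using c
    by (simp add: field_simps diff_divide_distrib[symmetric])
  have cxy: "c * (fst z - snd z) \<le> t2 - t1" "c * (snd z - fst z) \<le> t2 - t1" if "z \<in> S" for z
  proof -
    have "c * (fst z - snd z) \<le> c * (b - a)" by (rule mult_left_mono) (use Sb[OF that] c in auto)
    moreover have "c * (snd z - fst z) \<le> c * (b - a)" by (rule mult_left_mono) (use Sb[OF that] c in auto)
    ultimately show "c * (fst z - snd z) \<le> t2 - t1" "c * (snd z - fst z) \<le> t2 - t1" using key by auto
  qed
  have sameT: "(\<lambda>z. \<bar>fst (sim2 c u u z) - snd (sim2 c u u z)\<bar>) = (\<lambda>z. c * \<bar>fst z - snd z\<bar>)" for u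
  proof
    fix z :: "real \<times> real"
    have "c * fst z + u - (c * snd z + u) = c * (fst z - snd z)" by (simp add: algebra_simps)
    then show "\<bar>fst (sim2 c u u z) - snd (sim2 c u u z)\<bar> = c * \<bar>fst z - snd z\<bar>"
      using c by (simp add: sim2_def sim_def abs_mult)
  qed
  have T0: "integral\<^sup>L M (\<lambda>z. \<bar>fst (g 0 z) - snd (g 0 z)\<bar>) = c * D"
    unfolding g0 sameT D_def by (simp add: integral_mult_right_zero)
  have T3: "integral\<^sup>L M (\<lambda>z. \<bar>fst (g 3 z) - snd (g 3 z)\<bar>) = c * D"
    unfolding g3 sameT D_def by (simp add: integral_mult_right_zero)
  have idiff: "integrable M (\<lambda>z. snd z - fst z)" "integrable M (\<lambda>z. fst z - snd z)"
    using ifst isnd by auto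
  have T1: "integral\<^sup>L M (\<lambda>z. \<bar>fst (g 1 z) - snd (g 1 z)\<bar>) = c * (m2 - m1) + (t2 - t1)"
  proof -
    have "integral\<^sup>L M (\<lambda>z. \<bar>fst (g 1 z) - snd (g 1 z)\<bar>) = integral\<^sup>L M (\<lambda>z. c * (snd z - fst z) + (t2 - t1))"
    proof (rule integral_cong_AE)
      show "(\<lambda>z. \<bar>fst (g 1 z) - snd (g 1 z)\<bar>) \<in> borel_measurable M"
        unfolding g1 sim2_def sim_def by (intro mc continuous_intros)
      show "(\<lambda>z. c * (snd z - fst z) + (t2 - t1)) \<in> borel_measurable M"
        by (intro mc continuous_intros)
      show "AE z in M. \<bar>fst (g 1 z) - snd (g 1 z)\<bar> = c * (snd z - fst z) + (t2 - t1)"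
        using AES
      proof eventually_elim
        case (elim z)
        have "c * fst z + t1 - (c * snd z + t2) \<le> 0" using cxy(1)[OF elim] by (simp add: algebra_simps)
        then have "\<bar>c * fst z + t1 - (c * snd z + t2)\<bar> = -(c * fst z + t1 - (c * snd z + t2))" by (rule abs_of_nonpos)
        then show ?case unfolding g1 sim2_def sim_def by (simp add: algebra_simps abs_minus_commute)
      qed
    qed
    also have "\<dots> = c * (m2 - m1) + (t2 - t1)"
      by (simp add: lin[OF idiff(1)] m1_def m2_def Bochner_Integration.integral_diff[OF isnd ifst])
    finally show ?thesis .
  qed
  have T2: "integral\<^sup>L M (\<lambda>z. \<bar>fst (g 2 z) - snd (g 2 z)\<bar>) = c * (m1 - m2) + (t2 - t1)"
  proof -
    have "integral\<^sup>L M (\<lambda>z. \<bar>fst (g 2 z) - snd (g 2 z)\<bar>) = integral\<^sup>L M (\<lambda>z. c * (fst z - snd z) + (t2 - t1))"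
    proof (rule integral_cong_AE)
      show "(\<lambda>z. \<bar>fst (g 2 z) - snd (g 2 z)\<bar>) \<in> borel_measurable M"
        unfolding g2 sim2_def sim_def by (intro mc continuous_intros)
      show "(\<lambda>z. c * (fst z - snd z) + (t2 - t1)) \<in> borel_measurable M"
        by (intro mc continuous_intros)
      show "AE z in M. \<bar>fst (g 2 z) - snd (g 2 z)\<bar> = c * (fst z - snd z) + (t2 - t1)"
        using AES
      proof eventually_elim
        case (elim z)
        have "c * snd z + t1 - (c * fst z + t2) \<le> 0" using cxy(2)[OF elim] by (simp add: algebra_simps)
        then have "\<bar>c * snd z + t1 - (c * fst z + t2)\<bar> = -(c * snd z + t1 - (c * fst z + t2))" by (rule abs_of_nonpos)
        then show ?case unfolding g2 sim2_def sim_def by (simp add: algebra_simps abs_minus_commute)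
      qed
    qed
    also have "\<dots> = c * (m1 - m2) + (t2 - t1)"
      by (simp add: lin[OF idiff(2)] m1_def m2_def Bochner_Integration.integral_diff[OF ifst isnd])
    finally show ?thesis .
  qed
  have Deq: "D = r * (c * D) + (p - r) * (c * (m2 - m1) + (t2 - t1)) + (q - r) * (c * (m1 - m2) + (t2 - t1))
      + (1 - p - q + r) * (c * D)"
    using E3 unfolding sumI T0 T1 T2 T3 by (simp add: w_def)
  have h1: "(m2 - m1) * (1 - c) = (p - q) * (t2 - t1)" using m1eq m2eq by algebra
  have h2: "D * ((1-c) + c*(p+q-2*r)) = (p+q-2*r)*(t2-t1) + c*(p-q)*(m2-m1)" using Deq by algebra
  have den: "0 < (1-c) + c*(p+q-2*r)" using c as by (auto intro!: add_pos_nonneg)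
  have h3: "D * ((1-c) * ((1-c) + c*(p+q-2*r))) = (t2 - t1) * (c * (p - q)^2 + (1 - c) * (p + q - 2*r))"
  proof -
    have "D * ((1-c) * ((1-c) + c*(p+q-2*r))) = (1-c) * (D * ((1-c) + c*(p+q-2*r)))" by (simp add: algebra_simps)
    also have "\<dots> = (1-c) * ((p+q-2*r)*(t2-t1)) + c*(p-q)*((m2-m1)*(1-c))" unfolding h2 by (simp add: algebra_simps)
    also have "\<dots> = (t2 - t1) * (c * (p - q)^2 + (1 - c) * (p + q - 2*r))" unfolding h1 by (simp add: algebra_simps power2_eq_square)
    finally show ?thesis .
  qed
  have Dval: "D = (t2 - t1) / (1 - c) * ((c * (p - q)^2 + (1 - c) * (p + q - 2*r)) / ((1 - c) + c * (p + q - 2*r)))"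
  proof -
    have pos: "0 < (1-c) * ((1-c) + c*(p+q-2*r))" using den c by simp
    have "D = (t2 - t1) * (c * (p - q)^2 + (1 - c) * (p + q - 2*r)) / ((1-c) * ((1-c) + c*(p+q-2*r)))"
    proof (subst nonzero_eq_divide_eq)
      show "(1-c) * ((1-c) + c*(p+q-2*r)) \<noteq> 0" using pos by linarith
    qed (rule h3)
    then show ?thesis unfolding times_divide_times_eq .
  qed
  have FFb: "F \<times> F \<in> sets borel" using FP(3) by (intro borel_closed closed_Times compact_imp_closed) auto
  have "(\<integral>z \<in> F \<times> F. \<bar>fst z - snd z\<bar> \<partial>M) = integral\<^sup>L M (\<lambda>z. indicator (F \<times> F) z *\<^sub>R \<bar>fst z - snd z\<bar>)"
    by (simp add: set_lebesgue_integral_def)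
  also have "\<dots> = D" unfolding D_def
  proof (rule integral_cong_AE)
    show "(\<lambda>z. indicator (F \<times> F) z *\<^sub>R \<bar>fst z - snd z\<bar>) \<in> borel_measurable M"
      by (intro mM borel_measurable_scaleR borel_measurable_indicator FFb mabs)
    show "(\<lambda>z. \<bar>fst z - snd z\<bar>) \<in> borel_measurable M" by (rule mM[OF mabs])
    show "AE z in M. indicator (F \<times> F) z *\<^sub>R \<bar>fst z - snd z\<bar> = \<bar>fst z - snd z\<bar>"
      using AEF by eventually_elim simp
  qed
  finally show ?thesis unfolding F_def Dval .
qed

end
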